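(* In the setting of the context (with $g$ unimodal, symmetric about $0$ and logconcave), $C(\theta)\ge C(2d_0)$ for all $\theta\in[0,d_1]$.
   Context: Let $g$ be a probability density on $\mathbb{R}$, unimodal and symmetric about $0$ (i.e. $g(z)=g(-z)$ and $g$ nonincreasing on $[0,\infty)$), and logconcave ($\log g$ concave on its support), with cdf $G$ and quantile function $G^{-1}(t)=\inf\{x:G(x)\ge t\}$. Let $X$ have density $g(x-\theta)$, $\theta\ge0$, and $P_\theta$ the corresponding probability. Fix $\alpha\in(0,1)$, and set $d_0=G^{-1}(\tfrac1{1+\alpha})$, $d_1=G^{-1}(1-\tfrac\alpha2)$. The HPD credible interval (prior $1_{[0,\infty)}(\theta)$, credibility $1-\alpha$) is $[l(X),u(X)]$ with $l(x)=\{x-G^{-1}(\tfrac12+\tfrac{1-\alpha}2G(x))\}1_{(d_0,\infty)}(x)$, $u(x)=x-G^{-1}(\alpha G(x))$ for $x\le d_0$ and $u(x)=x+G^{-1}(\tfrac12+\tfrac{1-\alpha}2G(x))$ for $x>d_0$. The frequentist coverage is $C(\theta)=P_\theta(l(X)\le\theta\le u(X))$. *)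

theory Defs
  imports "HOL-Analysis.Analysis"
begin

definition sym_unimodal_logconcave_density :: "(real \<Rightarrow> real) \<Rightarrow> bool" where
  "sym_unimodal_logconcave_density g \<longleftrightarrow>
     g \<in> borel_measurable lborel \<and>
     (\<forall>z. 0 \<le> g z) \<and>
     integrable lborel g \<and> (LINT z|lborel. g z) = 1 \<and>
     (\<forall>z. g z = g (- z)) \<and>
     (\<forall>x y. 0 \<le> x \<longrightarrow> x \<le> y \<longrightarrow> g y \<le> g x) \<and>
     concave_on {z. 0 < g z} (\<lambda>z. ln (g z))"

definition cdf_of :: "(real \<Rightarrow> real) \<Rightarrow> real \<Rightarrow> real" where
  "cdf_of g x = (LINT z:{..x}|lborel. g z)"

definition quantile :: "(real \<Rightarrow> real) \<Rightarrow> real \<Rightarrow> real" where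
  "quantile G t = Inf {x. t \<le> G x}"

definition hpd_d0 :: "(real \<Rightarrow> real) \<Rightarrow> real \<Rightarrow> real" where
  "hpd_d0 g \<alpha> = quantile (cdf_of g) (1 / (1 + \<alpha>))"

definition hpd_d1 :: "(real \<Rightarrow> real) \<Rightarrow> real \<Rightarrow> real" where
  "hpd_d1 g \<alpha> = quantile (cdf_of g) (1 - \<alpha> / 2)"

definition hpd_l :: "(real \<Rightarrow> real) \<Rightarrow> real \<Rightarrow> real \<Rightarrow> real" where
  "hpd_l g \<alpha> x =
     (if hpd_d0 g \<alpha> < x
      then x - quantile (cdf_of g) (1/2 + (1 - \<alpha>) / 2 * cdf_of g x)
      else 0)"

definition hpd_u :: "(real \<Rightarrow> real) \<Rightarrow> real \<Rightarrow> real \<Rightarrow> real" where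
  "hpd_u g \<alpha> x =
     (if x \<le> hpd_d0 g \<alpha>
      then x - quantile (cdf_of g) (\<alpha> * cdf_of g x)
      else x + quantile (cdf_of g) (1/2 + (1 - \<alpha>) / 2 * cdf_of g x))"

definition coverage :: "(real \<Rightarrow> real) \<Rightarrow> real \<Rightarrow> real \<Rightarrow> real" where
  "coverage g \<alpha> \<theta> =
     measure (density lborel (\<lambda>x. ennreal (g (x - \<theta>))))
       {x. hpd_l g \<alpha> x \<le> \<theta> \<and> \<theta> \<le> hpd_u g \<alpha> x}"

end

theory Submission
  imports Defs "HOL-Probability.Distribution_Functions"
begin


locale LC =
  fixes g :: "real \<Rightarrow> real"
  assumes A: "sym_unimodal_logconcave_density g"
begin

lemma g_meas[measurable]: "g \<in> borel_measurable borel"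
  using A unfolding sym_unimodal_logconcave_density_def by (simp add: measurable_lborel1)
lemma g_nonneg: "0 \<le> g z" using A unfolding sym_unimodal_logconcave_density_def by auto
lemma g_int: "integrable lborel g" using A unfolding sym_unimodal_logconcave_density_def by auto
lemma g_int1: "(LINT z|lborel. g z) = 1" using A unfolding sym_unimodal_logconcave_density_def by auto
lemma g_sym: "g (- z) = g z" using A unfolding sym_unimodal_logconcave_density_def by metis
lemma g_mono: "0 \<le> x \<Longrightarrow> x \<le> y \<Longrightarrow> g y \<le> g x" using A unfolding sym_unimodal_logconcave_density_def by auto
lemma g_conc: "concave_on {z. 0 < g z} (\<lambda>z. ln (g z))" using A unfolding sym_unimodal_logconcave_density_def by auto

definition M where "M = density lborel (\<lambda>x. ennreal (g x))"

lemma sets_M[measurable_cong]: "sets M = sets borel" by (simp add: M_def)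

lemma emeasure_M: "A \<in> sets borel \<Longrightarrow> emeasure M A = (\<integral>\<^sup>+ x. ennreal (g x) * indicator A x \<partial>lborel)"
  unfolding M_def by (subst emeasure_density) auto

lemma emeasure_M_UNIV: "emeasure M UNIV = 1"
proof -
  have "emeasure M UNIV = (\<integral>\<^sup>+ x. ennreal (g x) \<partial>lborel)" by (simp add: emeasure_M)
  also have "\<dots> = ennreal (LINT z|lborel. g z)"
    by (rule nn_integral_eq_integral) (auto simp: g_int g_nonneg)
  finally show ?thesis by (simp add: g_int1)
qed

lemma ps: "prob_space M"
  by (rule prob_spaceI) (use emeasure_M_UNIV in \<open>simp add: M_def\<close>)

lemma rd: "real_distribution M"
  unfolding real_distribution_def real_distribution_axioms_def using ps by (simp add: sets_M)

end

sublocale LC \<subseteq> real_distribution M by (rule rd)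

context LC begin

lemma G_eq: "cdf_of g x = cdf M x"
proof -
  have "emeasure M {..x} = (\<integral>\<^sup>+ z. ennreal (g z * indicator {..x} z) \<partial>lborel)"
    by (simp add: emeasure_M, intro nn_integral_cong) (auto split: split_indicator)
  also have "\<dots> = ennreal (\<integral> z. g z * indicator {..x} z \<partial>lborel)"
    by (rule nn_integral_eq_integral)
       (use integrable_mult_indicator[OF _ g_int, of "{..x}"] in \<open>auto simp: g_nonneg mult.commute\<close>)
  finally have "measure M {..x} = (\<integral> z. g z * indicator {..x} z \<partial>lborel)"
    unfolding measure_def by (simp add: g_nonneg)
  then show ?thesis unfolding cdf_of_def cdf_def set_lebesgue_integral_def
    by (simp add: mult.commute)
qed

end



context LC begin

abbreviation G where "G \<equiv> cdf M"

lemma meas_single: "measure M {x} = 0"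
proof -
  have "emeasure M {x} = 0"
    by (simp add: emeasure_M nn_integral_null_set)
  then show ?thesis by (simp add: measure_def)
qed

lemma G_cont: "isCont G x" using isCont_cdf meas_single by simp

lemma G_cont_on: "continuous_on S G"
  using G_cont by (simp add: continuous_at_imp_continuous_on)

lemma G_meas[measurable]: "G \<in> borel_measurable borel"
  by (rule borel_measurable_continuous_onI) (rule G_cont_on)

lemma G_mono: "x \<le> y \<Longrightarrow> G x \<le> G y" by (rule cdf_nondecreasing)
lemma G_nonneg: "0 \<le> G x" by (rule cdf_nonneg)
lemma G_le1: "G x \<le> 1" by (rule cdf_bounded_prob)

lemma nn_affine:
  fixes f :: "real \<Rightarrow> ennreal"
  assumes [measurable]: "f \<in> borel_measurable borel"
  shows "(\<integral>\<^sup>+x. f x \<partial>lborel) = (\<integral>\<^sup>+x. f (t + x) \<partial>lborel)"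
  using nn_integral_real_affine[OF assms, of 1 t] by simp

lemma nn_refl:
  fixes f :: "real \<Rightarrow> ennreal"
  assumes [measurable]: "f \<in> borel_measurable borel"
  shows "(\<integral>\<^sup>+x. f x \<partial>lborel) = (\<integral>\<^sup>+x. f (- x) \<partial>lborel)"
  using nn_integral_real_affine[OF assms, of "-1" 0] by simp

lemma emeasure_M_real: "A \<in> sets borel \<Longrightarrow> emeasure M A = ennreal (measure M A)"
  by (simp add: emeasure_eq_measure)

lemma G_sym: "G (- x) = 1 - G x"
proof -
  have "emeasure M {..-x} = (\<integral>\<^sup>+ z. ennreal (g z) * indicator {..-x} z \<partial>lborel)"
    by (simp add: emeasure_M)
  also have "\<dots> = (\<integral>\<^sup>+ z. ennreal (g (-z)) * indicator {..-x} (-z) \<partial>lborel)"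
    by (rule nn_refl) simp
  also have "\<dots> = (\<integral>\<^sup>+ z. ennreal (g z) * indicator {x..} z \<partial>lborel)"
    by (intro nn_integral_cong) (auto simp: g_sym split: split_indicator)
  also have "\<dots> = emeasure M {x..}" by (simp add: emeasure_M)
  finally have "measure M {..-x} = measure M {x..}" by (simp add: measure_def)
  also have "\<dots> = measure M ({x} \<union> {x<..})"
    by (intro arg_cong[where f="measure M"]) auto
  also have "\<dots> = measure M {x} + measure M {x<..}"
    by (intro finite_measure_Union) auto
  also have "\<dots> = measure M {x<..}" by (simp add: meas_single)
  also have "\<dots> = measure M (space M - {..x})"
    by (intro arg_cong[where f="measure M"]) auto
  also have "\<dots> = 1 - G x" by (subst prob_compl) (auto simp: cdf_def)
  finally show ?thesis by (simp add: cdf_def)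
qed

lemma G_0: "G 0 = 1/2" using G_sym[of 0] by simp

lemma G_lim_top: "t < 1 \<Longrightarrow> \<exists>y. t < G y"
proof -
  assume "t < 1"
  then have "eventually (\<lambda>x. t < G x) at_top" using order_tendstoD(1)[OF cdf_lim_at_top_prob] by simp
  then obtain N where "\<forall>n\<ge>N. t < G n" unfolding eventually_at_top_linorder by blast
  then show ?thesis by blast
qed

lemma G_lim_bot: "0 < t \<Longrightarrow> \<exists>y. G y < t"
proof -
  assume "0 < t"
  then have "eventually (\<lambda>x. G x < t) at_bot" using order_tendstoD(2)[OF cdf_lim_at_bot] by simp
  then obtain N where "\<forall>n\<le>N. G n < t" unfolding eventually_at_bot_linorder by blast
  then show ?thesis by blast
qed

abbreviation Q where "Q \<equiv> quantile G"

lemma Q_set_bdd: "0 < t \<Longrightarrow> bdd_below {x. t \<le> G x}"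
proof -
  assume "0 < t"
  then obtain y where "G y < t" using G_lim_bot by blast
  have "y \<le> x" if "t \<le> G x" for x
  proof (rule ccontr)
    assume "\<not> y \<le> x"
    then have "G x \<le> G y" using G_mono by simp
    then show False using that \<open>G y < t\<close> by simp
  qed
  then show ?thesis by (auto simp: bdd_below_def)
qed

lemma Q_set_ne: "t < 1 \<Longrightarrow> {x. t \<le> G x} \<noteq> {}"
proof -
  assume "t < 1" then obtain y where "t < G y" using G_lim_top by blast
  then show ?thesis by (metis (mono_tags, lifting) empty_iff less_eq_real_def mem_Collect_eq)
qed

lemma Q_le: "0 < t \<Longrightarrow> t \<le> G y \<Longrightarrow> Q t \<le> y"
proof -
  assume "0 < t" "t \<le> G y"
  then show ?thesis unfolding quantile_def using cInf_lower[of y "{x. t \<le> G x}"] Q_set_bdd[of t] by simp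
qed

lemma Q_in: "0 < t \<Longrightarrow> t < 1 \<Longrightarrow> t \<le> G (Q t)"
proof -
  assume t: "0 < t" "t < 1"
  have "closed {x. t \<le> G x}"
    using closed_Collect_le[OF continuous_on_const G_cont_on] by simp
  then have "Q t \<in> {x. t \<le> G x}" unfolding quantile_def
    using closed_contains_Inf[of "{x. t \<le> G x}"] Q_set_ne[of t] Q_set_bdd[of t] t by simp
  then show ?thesis by simp
qed

lemma Q_iff: "0 < t \<Longrightarrow> t < 1 \<Longrightarrow> Q t \<le> y \<longleftrightarrow> t \<le> G y"
proof
  assume "0 < t" "t < 1" "Q t \<le> y"
  then show "t \<le> G y" using Q_in[of t] G_mono[of "Q t" y] by linarith
next
  assume "0 < t" "t \<le> G y"
  then show "Q t \<le> y" by (rule Q_le)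
qed

lemma G_Q: "0 < t \<Longrightarrow> t < 1 \<Longrightarrow> G (Q t) = t"
proof -
  assume t: "0 < t" "t < 1"
  obtain a where a: "G a < t" using G_lim_bot t by blast
  obtain b where b: "t < G b" using G_lim_top t by blast
  have "a \<le> b"
  proof (rule ccontr)
    assume "\<not> a \<le> b" then have "G b \<le> G a" using G_mono by simp
    then show False using a b by simp
  qed
  then obtain y where y: "G y = t" using IVT'[of G a t b] a b G_cont_on by force
  then have "Q t \<le> y" using Q_le[of t y] t by simp
  then have "G (Q t) \<le> t" using G_mono y by metis
  then show ?thesis using Q_in[OF t] by simp
qed

lemma Q_mono: "0 < s \<Longrightarrow> s \<le> t \<Longrightarrow> t < 1 \<Longrightarrow> Q s \<le> Q t"
  using Q_iff G_Q by simp

lemma Q_meas[measurable]: "Q \<in> borel_measurable borel"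
proof (rule borel_measurable_piecewise_mono[of "{{..0::real}, {0<..<1}, {1}, {1<..}}"])
  fix c :: "real set" assume "c \<in> {{..0}, {0<..<1}, {1}, {1<..}}"
  moreover have "mono_on {..0} Q"
  proof -
    have "\<And>t. t \<le> 0 \<Longrightarrow> {x. t \<le> G x} = UNIV" using G_nonneg by (smt (verit) UNIV_eq_I mem_Collect_eq)
    then show ?thesis by (auto simp: mono_on_def quantile_def)
  qed
  moreover have "mono_on {1<..} Q"
  proof -
    have "\<And>t. 1 < t \<Longrightarrow> {x. t \<le> G x} = {}" using G_le1 by (smt (verit) Collect_empty_eq)
    then show ?thesis by (auto simp: mono_on_def quantile_def)
  qed
  moreover have "mono_on {0<..<1} Q" by (auto simp: mono_on_def intro: Q_mono)
  ultimately show "mono_on c Q" by (auto simp: mono_on_def)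
qed auto

end



context LC begin

lemma I0: "(\<integral>\<^sup>+ t. ennreal (g t) * indicator {..x} t \<partial>lborel) = ennreal (G x)"
  by (simp add: emeasure_M[symmetric] emeasure_M_real cdf_def)

lemma I1: "a \<le> b \<Longrightarrow> (\<integral>\<^sup>+ t. ennreal (g t) * indicator {a<..b} t \<partial>lborel) = ennreal (G b - G a)"
proof -
  assume ab: "a \<le> b"
  have "(\<integral>\<^sup>+ t. ennreal (g t) * indicator {a<..b} t \<partial>lborel) = ennreal (measure M {a<..b})"
    by (simp add: emeasure_M[symmetric] emeasure_M_real)
  also have "measure M {a<..b} = G b - G a"
  proof (cases "a < b")
    case True then show ?thesis using cdf_diff_eq by simp
  next
    case False then show ?thesis using ab by simp
  qed
  finally show ?thesis .
qed

lemma Tr: "A \<in> sets borel \<Longrightarrow> (\<integral>\<^sup>+ s. ennreal (g (s - c)) * indicator A s \<partial>lborel)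
   = (\<integral>\<^sup>+ z. ennreal (g z) * indicator A (c + z) \<partial>lborel)"
  by (subst nn_affine[of _ c]) auto

lemma T0: "(\<integral>\<^sup>+ s. ennreal (g (s - c)) * indicator {..x} s \<partial>lborel) = ennreal (G (x - c))"
proof -
  have "(\<integral>\<^sup>+ s. ennreal (g (s - c)) * indicator {..x} s \<partial>lborel)
     = (\<integral>\<^sup>+ z. ennreal (g z) * indicator {..x} (c + z) \<partial>lborel)" by (rule Tr) simp
  also have "\<dots> = (\<integral>\<^sup>+ z. ennreal (g z) * indicator {..x-c} z \<partial>lborel)"
    by (intro nn_integral_cong) (auto split: split_indicator)
  finally show ?thesis using I0 by simp
qed

lemma T1: "a \<le> b \<Longrightarrow> (\<integral>\<^sup>+ s. ennreal (g (s - c)) * indicator {a<..b} s \<partial>lborel) = ennreal (G (b - c) - G (a - c))"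
proof -
  assume ab: "a \<le> b"
  have "(\<integral>\<^sup>+ s. ennreal (g (s - c)) * indicator {a<..b} s \<partial>lborel)
     = (\<integral>\<^sup>+ z. ennreal (g z) * indicator {a<..b} (c + z) \<partial>lborel)" by (rule Tr) simp
  also have "\<dots> = (\<integral>\<^sup>+ z. ennreal (g z) * indicator {a-c<..b-c} z \<partial>lborel)"
    by (intro nn_integral_cong) (auto split: split_indicator)
  finally show ?thesis using I1[of "a-c" "b-c"] ab by simp
qed

lemma LB:
  assumes "a \<le> b" "0 \<le> m" "\<And>t. a < t \<Longrightarrow> t \<le> b \<Longrightarrow> m \<le> g t"
  shows "m * (b - a) \<le> G b - G a"
proof -
  have "(\<integral>\<^sup>+ t. ennreal m * indicator {a<..b} t \<partial>lborel) \<le> (\<integral>\<^sup>+ t. ennreal (g t) * indicator {a<..b} t \<partial>lborel)"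
    by (intro nn_integral_mono) (auto split: split_indicator intro!: ennreal_leI assms(3))
  then have "ennreal m * ennreal (b - a) \<le> ennreal (G b - G a)"
    using assms(1) by (simp add: nn_integral_cmult_indicator I1)
  then have "ennreal (m * (b - a)) \<le> ennreal (G b - G a)"
    using assms by (simp add: ennreal_mult)
  moreover have "0 \<le> G b - G a" using G_mono assms(1) by simp
  ultimately show ?thesis by (simp add: ennreal_le_iff)
qed

lemma LC1:
  assumes "s \<le> t" "0 \<le> c"
  shows "g (s - c) * g t \<le> g s * g (t - c)"
proof (cases "g (s - c) = 0 \<or> g t = 0")
  case True then show ?thesis using g_nonneg by (auto intro: mult_nonneg_nonneg)
next
  case False
  let ?S = "{z. 0 < g z}"
  have cv: "convex ?S" using g_conc concave_on_imp_convex by blast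
  have p1: "0 < g (s - c)" "0 < g t" using False g_nonneg by (auto simp: order_le_less)
  show ?thesis
  proof (cases "c = 0")
    case True then show ?thesis by simp
  next
    case False
    then have cpos: "0 < c" using assms by simp
    define L where "L = t - (s - c)"
    have Lpos: "0 < L" using assms cpos by (simp add: L_def)
    define lam where "lam = c / L"
    have lam01: "0 \<le> lam" "lam \<le> 1" using assms cpos Lpos by (auto simp: lam_def L_def field_simps)
    have lamL: "lam * L = c" using Lpos by (simp add: lam_def)
    have h1: "(1 - lam) * (s - c) + lam * t = (s - c) + lam * L" by (simp add: L_def algebra_simps)
    have es: "s = (1 - lam) *\<^sub>R (s - c) + lam *\<^sub>R t"
      using h1 lamL by simp
    have h2: "lam * (s - c) + (1 - lam) * t = t - lam * L" by (simp add: L_def algebra_simps)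
    have et: "t - c = (1 - (1 - lam)) *\<^sub>R (s - c) + (1 - lam) *\<^sub>R t"
      using h2 lamL by simp
    have in1: "s - c \<in> ?S" "t \<in> ?S" using p1 by auto
    have ps: "s \<in> ?S" using convexD_alt[OF cv in1 lam01] es by simp
    have pt: "t - c \<in> ?S" using convexD_alt[OF cv in1, of "1 - lam"] lam01 et by simp
    have c1: "ln (g s) \<ge> (1 - lam) * ln (g (s - c)) + lam * ln (g t)"
      using concave_onD[OF g_conc lam01(1) lam01(2) in1] es by simp
    have c2: "ln (g (t - c)) \<ge> (1 - (1 - lam)) * ln (g (s - c)) + (1 - lam) * ln (g t)"
      using concave_onD[OF g_conc _ _ in1, of "1 - lam"] lam01 et by simp
    have "ln (g (s - c)) + ln (g t) \<le> ln (g s) + ln (g (t - c))"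
      using c1 c2 by (simp add: algebra_simps)
    then have "ln (g (s - c) * g t) \<le> ln (g s * g (t - c))"
      using p1 ps pt by (simp add: ln_mult)
    then show ?thesis using p1 ps pt by simp
  qed
qed


lemma enn_conv: "0 \<le> a \<Longrightarrow> 0 \<le> b \<Longrightarrow> 0 \<le> c \<Longrightarrow> 0 \<le> d \<Longrightarrow>
  ennreal a * ennreal b \<le> ennreal c * ennreal d \<Longrightarrow> a * b \<le> c * d"
  by (simp add: ennreal_mult[symmetric] ennreal_le_iff)

lemma LC2:
  assumes "x \<le> t" "0 \<le> c"
  shows "G (x - c) * g t \<le> G x * g (t - c)"
proof -
  have "(\<integral>\<^sup>+ s. ennreal (g t) * (ennreal (g (s - c)) * indicator {..x} s) \<partial>lborel)
     \<le> (\<integral>\<^sup>+ s. ennreal (g (t - c)) * (ennreal (g s) * indicator {..x} s) \<partial>lborel)"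
  proof (intro nn_integral_mono)
    fix s
    show "ennreal (g t) * (ennreal (g (s - c)) * indicator {..x} s)
       \<le> ennreal (g (t - c)) * (ennreal (g s) * indicator {..x} s)"
    proof (cases "s \<le> x")
      case True
      then have "g (s - c) * g t \<le> g s * g (t - c)" using LC1[of s t c] assms by simp
      then have "ennreal (g t * g (s - c)) \<le> ennreal (g (t - c) * g s)"
        by (intro ennreal_leI) (simp add: mult.commute)
      then show ?thesis using True g_nonneg by (simp add: ennreal_mult[symmetric])
    qed simp
  qed
  then have "ennreal (g t) * ennreal (G (x - c)) \<le> ennreal (g (t - c)) * ennreal (G x)"
    by (simp add: nn_integral_cmult T0 I0)
  then have "g t * G (x - c) \<le> g (t - c) * G x"
    by (intro enn_conv) (auto simp: g_nonneg G_nonneg)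
  then show ?thesis by (simp add: mult.commute)
qed

lemma INT:
  assumes "m \<le> y" "0 \<le> \<delta>" "0 \<le> A" "0 \<le> B"
    and pw: "\<And>t. m < t \<Longrightarrow> t \<le> y \<Longrightarrow> A * g t + \<delta> \<le> B * g (t - c)"
  shows "A * (G y - G m) + \<delta> * (y - m) \<le> B * (G (y - c) - G (m - c))"
proof -
  have "(\<integral>\<^sup>+ t. ennreal A * (ennreal (g t) * indicator {m<..y} t) + ennreal \<delta> * indicator {m<..y} t \<partial>lborel)
     \<le> (\<integral>\<^sup>+ t. ennreal B * (ennreal (g (t - c)) * indicator {m<..y} t) \<partial>lborel)" (is "?L \<le> ?R")
  proof (intro nn_integral_mono)
    fix t
    show "ennreal A * (ennreal (g t) * indicator {m<..y} t) + ennreal \<delta> * indicator {m<..y} t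
       \<le> ennreal B * (ennreal (g (t - c)) * indicator {m<..y} t)"
    proof (cases "m < t \<and> t \<le> y")
      case True
      then have "ennreal (A * g t + \<delta>) \<le> ennreal (B * g (t - c))" using pw by (intro ennreal_leI) simp
      moreover have "ennreal (A * g t + \<delta>) = ennreal A * ennreal (g t) + ennreal \<delta>"
        using assms g_nonneg[of t] by (simp add: ennreal_plus ennreal_mult)
      moreover have "ennreal (B * g (t - c)) = ennreal B * ennreal (g (t - c))"
        using assms g_nonneg[of "t - c"] by (simp add: ennreal_mult)
      ultimately show ?thesis using True by simp
    next
      case False then have "indicator {m<..y} t = (0::ennreal)" by (simp add: indicator_def)
      then show ?thesis by simp
    qed
  qed
  then have "ennreal A * ennreal (G y - G m) + ennreal \<delta> * ennreal (y - m) \<le> ennreal B * ennreal (G (y - c) - G (m - c))"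
  proof -
    have "(\<integral>\<^sup>+ t. ennreal A * (ennreal (g t) * indicator {m<..y} t) + ennreal \<delta> * indicator {m<..y} t \<partial>lborel)
      = ennreal A * (\<integral>\<^sup>+ t. ennreal (g t) * indicator {m<..y} t \<partial>lborel) + ennreal \<delta> * emeasure lborel {m<..y}"
      by (simp add: nn_integral_add nn_integral_cmult nn_integral_cmult_indicator)
    moreover have "(\<integral>\<^sup>+ t. ennreal B * (ennreal (g (t - c)) * indicator {m<..y} t) \<partial>lborel)
      = ennreal B * (\<integral>\<^sup>+ t. ennreal (g (t - c)) * indicator {m<..y} t \<partial>lborel)"
      by (simp add: nn_integral_cmult)
    ultimately show ?thesis using \<open>?L \<le> ?R\<close> assms(1) I1[OF assms(1)] T1[OF assms(1), of c] by simp
  qed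
  moreover have "0 \<le> G y - G m" "0 \<le> G (y - c) - G (m - c)" using G_mono assms(1) by auto
  ultimately have "ennreal (A * (G y - G m) + \<delta> * (y - m)) \<le> ennreal (B * (G (y - c) - G (m - c)))"
    using assms by (simp add: ennreal_mult ennreal_plus)
  then show ?thesis using assms \<open>0 \<le> G (y - c) - G (m - c)\<close> by (simp add: ennreal_le_iff)
qed

lemma LC3raw:
  assumes "x \<le> y" "0 \<le> c"
  shows "G (x - c) * (G y - G x) \<le> G x * (G (y - c) - G (x - c))"
  using INT[of x y 0 "G (x - c)" "G x" c] LC2[of x _ c] assms G_nonneg by simp

lemma LC3:
  assumes "x \<le> y" "0 \<le> c"
  shows "G (x - c) * G y \<le> G x * G (y - c)"
  using LC3raw[OF assms] by (simp add: algebra_simps)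

end



locale LCA = LC +
  fixes \<alpha> :: real
  assumes a0: "0 < \<alpha>" and a1: "\<alpha> < 1"
begin

definition d0 where "d0 = Q (1 / (1 + \<alpha>))"
definition d1 where "d1 = Q (1 - \<alpha> / 2)"

lemma Gd0: "G d0 = 1 / (1 + \<alpha>)"
  unfolding d0_def using a0 by (intro G_Q) (auto simp: field_simps)
lemma Gmd0: "G (- d0) = \<alpha> / (1 + \<alpha>)"
  using G_sym[of d0] Gd0 a0 by (simp add: field_simps)
lemma Gd1: "G d1 = 1 - \<alpha> / 2"
  unfolding d1_def using a0 a1 by (intro G_Q) auto
lemma Gmd1: "G (- d1) = \<alpha> / 2"
  using G_sym[of d1] Gd1 by simp

lemma d0_pos: "0 < d0"
proof (rule ccontr)
  assume "\<not> 0 < d0"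
  then have "G d0 \<le> G 0" using G_mono by simp
  then show False using Gd0 G_0 a0 a1 by (simp add: field_simps)
qed

lemma d0_le_d1: "d0 \<le> d1"
proof -
  have "1 / (1 + \<alpha>) \<le> 1 - \<alpha> / 2"
    using a0 a1 by (simp add: field_simps)
  then show ?thesis unfolding d0_def d1_def using a0 a1 by (intro Q_mono) auto
qed

lemma g_abs: "\<bar>s\<bar> \<le> \<bar>t\<bar> \<Longrightarrow> g t \<le> g s"
proof -
  assume "\<bar>s\<bar> \<le> \<bar>t\<bar>"
  then have "g \<bar>t\<bar> \<le> g \<bar>s\<bar>" by (intro g_mono) auto
  moreover have "g \<bar>t\<bar> = g t" "g \<bar>s\<bar> = g s" using g_sym by (auto simp: abs_if)
  ultimately show ?thesis by simp
qed

lemma gd0_pos: "0 < g d0"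
proof (rule ccontr)
  assume "\<not> 0 < g d0"
  then have z: "g d0 = 0" using g_nonneg[of d0] by simp
  have pw: "ennreal (g t) * indicator {d0<..} t = 0" for t
  proof (cases "d0 < t")
    case True
    then have "g t \<le> g d0" using g_mono d0_pos by simp
    then have "g t = 0" using z g_nonneg[of t] by simp
    then show ?thesis by simp
  qed simp
  have "emeasure M {d0<..} = 0" by (simp add: emeasure_M pw)
  then have "measure M {d0<..} = 0" by (simp add: measure_def)
  moreover have "measure M {d0<..} = 1 - G d0"
  proof -
    have "{d0<..} = space M - {..d0}" by auto
    then show ?thesis using prob_compl[of "{..d0}"] by (simp add: cdf_def)
  qed
  ultimately show False using Gd0 a0 by (simp add: field_simps)
qed

lemma d1_le_2d0: "d1 \<le> 2 * d0"
proof -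
  have "G (- d0 - d0) * G 0 \<le> G (- d0) * G (0 - d0)"
    using LC3[of "- d0" 0 d0] d0_pos by simp
  then have "G (- (2 * d0)) * (1/2) \<le> (\<alpha> / (1 + \<alpha>)) * (\<alpha> / (1 + \<alpha>))"
    using Gmd0 G_0 by simp
  then have h: "G (- (2 * d0)) \<le> 2 * ((\<alpha> / (1 + \<alpha>)) * (\<alpha> / (1 + \<alpha>)))"
    by linarith
  have "2 * ((\<alpha> / (1 + \<alpha>)) * (\<alpha> / (1 + \<alpha>))) \<le> \<alpha> / 2"
  proof -
    have e: "(1 + \<alpha>) * (1 + \<alpha>) - 4 * \<alpha> = (1 - \<alpha>) * (1 - \<alpha>)" by (simp add: algebra_simps)
    have "0 \<le> (1 - \<alpha>) * (1 - \<alpha>)" by simp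
    then have k: "4 * \<alpha> \<le> (1 + \<alpha>) * (1 + \<alpha>)" using e by linarith
    then have k2: "4 * \<alpha> * \<alpha> \<le> \<alpha> * ((1 + \<alpha>) * (1 + \<alpha>))"
      using a0 mult_right_mono[OF k, of \<alpha>] by (simp add: algebra_simps)
    have p: "0 < (1 + \<alpha>) * (1 + \<alpha>)" using a0 by simp
    have "2 * ((\<alpha> / (1 + \<alpha>)) * (\<alpha> / (1 + \<alpha>))) = (2 * \<alpha> * \<alpha>) / ((1 + \<alpha>) * (1 + \<alpha>))"
      by simp
    also have "\<dots> \<le> \<alpha> / 2" using k2 p by (simp add: divide_simps)
    finally show ?thesis .
  qed
  then have "1 - \<alpha> / 2 \<le> G (2 * d0)" using h G_sym[of "2 * d0"] by simp
  then show ?thesis unfolding d1_def using a0 a1 by (intro Q_le) auto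
qed

lemma F3: "0 \<le> x \<Longrightarrow> \<alpha> * G x \<le> G (x - d1)"
proof -
  assume "0 \<le> x"
  then have "G (0 - d1) * G x \<le> G 0 * G (x - d1)"
    using LC3[of 0 x d1] d0_pos d0_le_d1 by simp
  then show ?thesis using Gmd1 G_0 by simp
qed

lemma F4:
  assumes x: "x < d0" and gp: "0 < g (x - 2 * d0)"
  shows "G (x - 2 * d0) < \<alpha> * G x"
proof -
  have a: "G (x - d0 - d0) * G 0 \<le> G (x - d0) * G (0 - d0)"
    using LC3[of "x - d0" 0 d0] x d0_pos by simp
  have gap: "g (x - 2 * d0) * (x - (x - d0)) \<le> G x - G (x - d0)"
  proof (rule LB)
    fix t assume "x - d0 < t" "t \<le> x"
    then show "g (x - 2 * d0) \<le> g t" using x d0_pos by (intro g_abs) auto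
  qed (use d0_pos g_nonneg in auto)
  have gap_pos: "0 < G x - G (x - d0)"
    using gap gp d0_pos by (smt (verit) mult_pos_pos)
  define m where "m = max x (d0 / 2)"
  have xm: "x \<le> m" and md: "m < d0" using x d0_pos by (auto simp: m_def)
  define A where "A = G (x - d0)"
  define B where "B = G x"
  define \<delta> where "\<delta> = (G x - G (x - d0)) * g d0"
  have dpos: "0 < \<delta>" using gap_pos gd0_pos by (simp add: \<delta>_def)
  have p1: "A * (G m - G x) \<le> B * (G (m - d0) - G (x - d0))"
    unfolding A_def B_def using LC3raw[OF xm, of d0] d0_pos by simp
  have p2: "A * (G d0 - G m) + \<delta> * (d0 - m) \<le> B * (G (d0 - d0) - G (m - d0))"
  proof (rule INT)
    fix t assume t: "m < t" "t \<le> d0"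
    then have t0: "d0 / 2 < t" "x < t" by (auto simp: m_def)
    have "g t \<le> g (t - d0)" using t t0 d0_pos by (intro g_abs) auto
    moreover have "g d0 \<le> g t" using t t0 d0_pos by (intro g_mono) auto
    moreover have "0 \<le> B - A" using gap_pos by (simp add: A_def B_def)
    moreover have "0 \<le> B" "0 \<le> g t" by (auto simp: B_def G_nonneg g_nonneg)
    ultimately have "B * g t \<le> B * g (t - d0)" "(B - A) * g d0 \<le> (B - A) * g t"
      by (auto intro: mult_left_mono)
    then show "A * g t + \<delta> \<le> B * g (t - d0)" by (simp add: \<delta>_def A_def B_def algebra_simps)
  qed (use md dpos G_nonneg in \<open>auto simp: A_def B_def\<close>)
  have "A * G d0 + \<delta> * (d0 - m) \<le> B * G 0"
    using p1 p2 unfolding A_def B_def by (simp add: algebra_simps)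
  then have c: "A * G d0 < B * G 0" using dpos md by (smt (verit) mult_pos_pos)
  then have c': "G (x - d0) < (1 + \<alpha>) / 2 * G x"
    using Gd0 G_0 a0 by (simp add: A_def B_def field_simps)
  have a': "G (x - 2 * d0) \<le> 2 * \<alpha> / (1 + \<alpha>) * G (x - d0)"
    using a Gmd0 G_0 a0 by (simp add: field_simps)
  have "2 * \<alpha> / (1 + \<alpha>) * G (x - d0) < 2 * \<alpha> / (1 + \<alpha>) * ((1 + \<alpha>) / 2 * G x)"
    using c' a0 by (intro mult_strict_left_mono) auto
  also have "\<dots> = \<alpha> * G x" using a0 by (simp add: field_simps)
  finally show ?thesis using a' by simp
qed

end



context LCA begin

lemma cdfG: "cdf_of g = G" using G_eq by (rule ext)

lemma hd0: "hpd_d0 g \<alpha> = d0" by (simp add: hpd_d0_def d0_def cdfG)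
lemma hd1: "hpd_d1 g \<alpha> = d1" by (simp add: hpd_d1_def d1_def cdfG)

lemma hl: "hpd_l g \<alpha> x = (if d0 < x then x - Q (1/2 + (1 - \<alpha>) / 2 * G x) else 0)"
  by (simp add: hpd_l_def hd0 cdfG)
lemma hu: "hpd_u g \<alpha> x = (if x \<le> d0 then x - Q (\<alpha> * G x) else x + Q (1/2 + (1 - \<alpha>) / 2 * G x))"
  by (simp add: hpd_u_def hd0 cdfG)

definition S where "S \<theta> = {x. hpd_l g \<alpha> x \<le> \<theta> \<and> \<theta> \<le> hpd_u g \<alpha> x}"

lemma S_meas: "S \<theta> \<in> sets borel"
  unfolding S_def hl hu by measurable

lemma cov_eq: "coverage g \<alpha> \<theta> = measure M {z. z + \<theta> \<in> S \<theta>}"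
proof -
  have "emeasure (density lborel (\<lambda>x. ennreal (g (x - \<theta>)))) (S \<theta>)
     = (\<integral>\<^sup>+ x. ennreal (g (x - \<theta>)) * indicator (S \<theta>) x \<partial>lborel)"
    using S_meas by (subst emeasure_density) auto
  also have "\<dots> = (\<integral>\<^sup>+ z. ennreal (g z) * indicator (S \<theta>) (\<theta> + z) \<partial>lborel)"
    using S_meas by (rule Tr)
  also have "\<dots> = (\<integral>\<^sup>+ z. ennreal (g z) * indicator {z. z + \<theta> \<in> S \<theta>} z \<partial>lborel)"
    by (intro nn_integral_cong) (auto simp: add.commute split: split_indicator)
  also have "\<dots> = emeasure M {z. z + \<theta> \<in> S \<theta>}"
    using S_meas by (subst emeasure_M) (auto simp: measurable_sets_borel)
  finally show ?thesis unfolding coverage_def S_def[symmetric] measure_def by simp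
qed

lemma c_bounds: "0 < 1/2 + (1 - \<alpha>) / 2 * G x" "1/2 + (1 - \<alpha>) / 2 * G x \<le> 1 - \<alpha> / 2"
  "1/2 + (1 - \<alpha>) / 2 * G x < 1"
proof -
  have n: "0 \<le> (1 - \<alpha>) / 2" using a1 by simp
  have "(1 - \<alpha>) / 2 * G x \<le> (1 - \<alpha>) / 2 * 1" using G_le1[of x] n by (rule mult_left_mono)
  moreover have "0 \<le> (1 - \<alpha>) / 2 * G x" using n G_nonneg[of x] by simp
  ultimately show "0 < 1/2 + (1 - \<alpha>) / 2 * G x" "1/2 + (1 - \<alpha>) / 2 * G x \<le> 1 - \<alpha> / 2"
    "1/2 + (1 - \<alpha>) / 2 * G x < 1" using a0 by auto
qed


lemma K_eq: "G d0 - G (- d1) = G d1 - G (- d0)"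
  using G_sym[of d0] G_sym[of d1] by simp

lemma lower:
  assumes th: "0 \<le> \<theta>" "\<theta> \<le> d1"
  shows "G d0 - G (- d1) \<le> coverage g \<alpha> \<theta>"
proof -
  have sub: "{-d1<..d0} \<subseteq> {z. z + \<theta> \<in> S \<theta>}"
  proof
    fix z assume z: "z \<in> {-d1<..d0}"
    define x where "x = z + \<theta>"
    have "hpd_l g \<alpha> x \<le> \<theta> \<and> \<theta> \<le> hpd_u g \<alpha> x"
    proof (cases "d0 < x")
      case True
      define c where "c = 1/2 + (1 - \<alpha>) / 2 * G x"
      have cb: "0 < c" "c < 1" using c_bounds unfolding c_def by auto
      have "G d0 \<le> G x" using True G_mono by simp
      then have "1 / (1 + \<alpha>) \<le> G x" using Gd0 by simp
      then have "(1 - \<alpha>) / 2 * (1 / (1 + \<alpha>)) \<le> (1 - \<alpha>) / 2 * G x" using a1 by (intro mult_left_mono) auto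
      moreover have "1/2 + (1 - \<alpha>) / 2 * (1 / (1 + \<alpha>)) = 1 / (1 + \<alpha>)" using a0 by (simp add: field_simps)
      ultimately have "1 / (1 + \<alpha>) \<le> c" unfolding c_def by linarith
      then have h: "d0 \<le> Q c" unfolding d0_def using cb a0 by (intro Q_mono) auto
      have "x - Q c \<le> \<theta>" using h z by (simp add: x_def)
      moreover have "\<theta> \<le> x + Q c" using h True d1_le_2d0 th by simp
      ultimately show ?thesis using True by (simp add: hl hu c_def)
    next
      case False
      have Gz: "\<alpha> / 2 \<le> G z" using G_mono[of "- d1" z] z Gmd1 by simp
      have zx: "G z \<le> G x" using G_mono th by (simp add: x_def)
      have "\<alpha> * G x \<le> G z"
      proof (cases "x \<le> 0")
        case True
        then have "G x \<le> 1/2" using G_mono[of x 0] G_0 by simp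
        then have "\<alpha> * G x \<le> \<alpha> * (1/2)" using a0 by (intro mult_left_mono) auto
        then show ?thesis using Gz by simp
      next
        case False
        then have "\<alpha> * G x \<le> G (x - d1)" using F3 by simp
        also have "\<dots> \<le> G z" using G_mono th by (simp add: x_def)
        finally show ?thesis .
      qed
      moreover have "0 < \<alpha> * G x" using Gz zx a0 by (intro mult_pos_pos) auto
      ultimately have "Q (\<alpha> * G x) \<le> z" by (intro Q_le)
      then show ?thesis using False th by (simp add: hl hu x_def)
    qed
    then show "z \<in> {z. z + \<theta> \<in> S \<theta>}" by (simp add: S_def x_def)
  qed
  have "measure M {-d1<..d0} \<le> measure M {z. z + \<theta> \<in> S \<theta>}"
    using sub S_meas by (intro finite_measure_mono) (auto simp: measurable_sets_borel)
  moreover have "measure M {-d1<..d0} = G d0 - G (- d1)"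
    using cdf_diff_eq[of "- d1" d0] d0_pos d0_le_d1 by simp
  ultimately show ?thesis using cov_eq by simp
qed

lemma upper: "coverage g \<alpha> (2 * d0) \<le> G d1 - G (- d0)"
proof -
  define Z where "Z = {z. g z = 0}"
  have sub: "{z. z + 2 * d0 \<in> S (2 * d0)} \<subseteq> {-d0<..d1} \<union> {-d0} \<union> Z"
  proof
    fix z assume "z \<in> {z. z + 2 * d0 \<in> S (2 * d0)}"
    then have zS: "z + 2 * d0 \<in> S (2 * d0)" by simp
    define x where "x = z + 2 * d0"
    show "z \<in> {-d0<..d1} \<union> {-d0} \<union> Z"
    proof (cases "d0 < x")
      case True
      define c where "c = 1/2 + (1 - \<alpha>) / 2 * G x"
      have cb: "0 < c" "c \<le> 1 - \<alpha> / 2" using c_bounds unfolding c_def by auto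
      have "x - Q c \<le> 2 * d0" using zS True by (simp add: S_def hl x_def c_def)
      moreover have "Q c \<le> d1" unfolding d1_def using cb a0 a1 by (intro Q_mono) auto
      ultimately have "z \<le> d1" by (simp add: x_def)
      moreover have "- d0 < z" using True by (simp add: x_def)
      ultimately show ?thesis by simp
    next
      case False
      show ?thesis
      proof (cases "x = d0 \<or> g z = 0")
        case True then show ?thesis by (auto simp: x_def Z_def)
      next
        case False2: False
        then have xl: "x < d0" and gp: "0 < g (x - 2 * d0)"
          using False g_nonneg[of z] by (auto simp: x_def)
        have F: "G (x - 2 * d0) < \<alpha> * G x" by (rule F4[OF xl gp])
        then have p: "0 < \<alpha> * G x" using G_nonneg[of "x - 2 * d0"] by simp
        have "\<alpha> * G x \<le> \<alpha> * 1" using G_le1[of x] a0 by (intro mult_left_mono) auto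
        then have "\<alpha> * G x < 1" using a1 by simp
        moreover have "2 * d0 \<le> x - Q (\<alpha> * G x)" using zS False by (simp add: S_def hu x_def)
        then have "Q (\<alpha> * G x) \<le> x - 2 * d0" by simp
        ultimately have "\<alpha> * G x \<le> G (x - 2 * d0)" using Q_iff p by simp
        then show ?thesis using F by simp
      qed
    qed
  qed
  have Zm: "Z \<in> sets borel" unfolding Z_def by measurable
  have Z0: "measure M Z = 0"
  proof -
    have pw: "ennreal (g t) * indicator Z t = 0" for t by (cases "g t = 0") (auto simp: Z_def indicator_def)
    have "emeasure M Z = 0" using Zm by (simp add: emeasure_M pw)
    then show ?thesis by (simp add: measure_def)
  qed
  have "measure M {z. z + 2 * d0 \<in> S (2 * d0)} \<le> measure M ({-d0<..d1} \<union> {-d0} \<union> Z)"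
    using sub Zm by (intro finite_measure_mono) (auto simp: measurable_sets_borel)
  also have "\<dots> \<le> measure M ({-d0<..d1} \<union> {-d0}) + measure M Z"
    using Zm by (intro measure_Un_le) auto
  also have "\<dots> \<le> measure M {-d0<..d1} + measure M {-d0} + measure M Z"
    using measure_Un_le[of "{-d0<..d1}" M "{-d0}"] by simp
  also have "\<dots> = G d1 - G (- d0)"
    using cdf_diff_eq[of "- d0" d1] d0_pos d0_le_d1 meas_single Z0 by simp
  finally show ?thesis using cov_eq by simp
qed

lemma main:
  assumes "0 \<le> \<theta>" "\<theta> \<le> d1"
  shows "coverage g \<alpha> (2 * d0) \<le> coverage g \<alpha> \<theta>"
  using upper lower[OF assms] K_eq by simp
end


theorem lemma6:
  fixes g :: "real \<Rightarrow> real" and \<alpha> \<theta> :: real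
  assumes "sym_unimodal_logconcave_density g"
    and "0 < \<alpha>" and "\<alpha> < 1"
    and "0 \<le> \<theta>" and "\<theta> \<le> hpd_d1 g \<alpha>"
  shows "coverage g \<alpha> \<theta> \<ge> coverage g \<alpha> (2 * hpd_d0 g \<alpha>)"
proof -
  interpret LCA g \<alpha> using assms by unfold_locales auto
  show ?thesis using main[of \<theta>] hd0 hd1 assms by simp
qed

end
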